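(* Let $A=(a_{ij})\in M_n(\mathbb{C})$ and suppose the Schur map $S_A\colon M_n(\mathbb{C})\to M_n(\mathbb{C})$, $S_A(B)=A\circ B$, is unital, i.e. $S_A(I)=I$. Then the following are equivalent: (i) $S_A$ is multiplicative and $*$-preserving (i.e. $S_A(BC)=S_A(B)S_A(C)$ and $S_A(B^* )=S_A(B)^*$ for all $B,C$); (ii) $S_A$ is a completely positive algebra isomorphism of $M_n(\mathbb{C})$; (iii) $A$ has rank one, is normal, and has all diagonal entries equal to $1$; (iv) $A$ has rank one, all entries of $A$ have modulus $1$, and all diagonal entries equal $1$; (v) $A$ is self-adjoint, $\mathrm{Spec}(A)=\{0,n\}$ with the eigenvalue $0$ of multiplicity $n-1$, and $\|S_A\|=1$; (vi) $A$ has no zero entries, and both $A$ and $A^{[-1]}$ are positive matrices with all diagonal entries equal to $1$.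
   Context: $A\circ B=(a_{ij}b_{ij})$ is the entrywise (Schur) product. A positive matrix means a Hermitian matrix with nonnegative spectrum. For a matrix with no zero entries, $A^{[-1]}=(1/a_{ij})$. $\|S_A\|$ is the operator norm of the linear map $S_A$ when $M_n(\mathbb{C})$ carries the operator norm. A map $\Phi$ on $M_n(\mathbb{C})$ is completely positive if $\mathrm{Id}_{M_k}\otimes\Phi$ is positive for every $k$. $\mathrm{Spec}$ denotes the set of eigenvalues. *)

theory Defs
  imports "Jordan_Normal_Form.Spectral_Radius" "Jordan_Normal_Form.Schur_Decomposition"
          "Jordan_Normal_Form.DL_Rank"
begin

definition schur_prod :: "complex mat \<Rightarrow> complex mat \<Rightarrow> complex mat" where
  "schur_prod A B = mat (dim_row A) (dim_col A) (\<lambda>(i,j). A $$ (i,j) * B $$ (i,j))"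

definition entry_inv :: "complex mat \<Rightarrow> complex mat" where
  "entry_inv A = mat (dim_row A) (dim_col A) (\<lambda>(i,j). 1 / A $$ (i,j))"

definition positive_mat :: "complex mat \<Rightarrow> bool" where
  "positive_mat A \<longleftrightarrow> dim_row A = dim_col A \<and> mat_adjoint A = A \<and>
     (\<forall>z\<in>spectrum A. Im z = 0 \<and> Re z \<ge> 0)"

definition vnorm :: "complex vec \<Rightarrow> real" where
  "vnorm v = sqrt (\<Sum>i<dim_vec v. (cmod (v $ i))\<^sup>2)"

definition op_norm :: "complex mat \<Rightarrow> real" where
  "op_norm M = Sup {vnorm (M *\<^sub>v x) | x. x \<in> carrier_vec (dim_col M) \<and> vnorm x \<le> 1}"

definition schur_map_norm :: "nat \<Rightarrow> complex mat \<Rightarrow> real" where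
  "schur_map_norm n A = Sup {op_norm (schur_prod A B) | B. B \<in> carrier_mat n n \<and> op_norm B \<le> 1}"

definition block_of :: "nat \<Rightarrow> complex mat \<Rightarrow> nat \<Rightarrow> nat \<Rightarrow> complex mat" where
  "block_of n X p q = mat n n (\<lambda>(r,s). X $$ (p*n + r, q*n + s))"

text \<open>Id_{M_k} tensor Phi, acting blockwise on kn x kn matrices.\<close>
definition ampl :: "nat \<Rightarrow> nat \<Rightarrow> (complex mat \<Rightarrow> complex mat) \<Rightarrow> complex mat \<Rightarrow> complex mat" where
  "ampl k n \<Phi> X = mat (k*n) (k*n)
     (\<lambda>(i,j). (\<Phi> (block_of n X (i div n) (j div n))) $$ (i mod n, j mod n))"

definition positive_map_on :: "nat \<Rightarrow> (complex mat \<Rightarrow> complex mat) \<Rightarrow> bool" where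
  "positive_map_on m \<Phi> \<longleftrightarrow> (\<forall>X\<in>carrier_mat m m. positive_mat X \<longrightarrow> positive_mat (\<Phi> X))"

definition completely_positive :: "nat \<Rightarrow> (complex mat \<Rightarrow> complex mat) \<Rightarrow> bool" where
  "completely_positive n \<Phi> \<longleftrightarrow> (\<forall>k. positive_map_on (k*n) (ampl k n \<Phi>))"

definition algebra_iso :: "nat \<Rightarrow> (complex mat \<Rightarrow> complex mat) \<Rightarrow> bool" where
  "algebra_iso n \<Phi> \<longleftrightarrow> bij_betw \<Phi> (carrier_mat n n) (carrier_mat n n) \<and>
     (\<forall>B\<in>carrier_mat n n. \<forall>C\<in>carrier_mat n n.
        \<Phi> (B + C) = \<Phi> B + \<Phi> C \<and> \<Phi> (B * C) = \<Phi> B * \<Phi> C) \<and>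
     (\<forall>c. \<forall>B\<in>carrier_mat n n. \<Phi> (c \<cdot>\<^sub>m B) = c \<cdot>\<^sub>m \<Phi> B)"

end

theory Submission
  imports Defs "Jordan_Normal_Form.Jordan_Normal_Form_Uniqueness"
begin

lemma mult_index:
  assumes "A \<in> carrier_mat n m" "B \<in> carrier_mat m p" "i < n" "j < p"
  shows "(A * B) $$ (i,j) = (\<Sum>k<m. A $$ (i,k) * B $$ (k,j))"
  using assms by (auto simp: scalar_prod_def intro!: sum.cong)

lemma mult_vec_index:
  assumes "A \<in> carrier_mat n m" "v \<in> carrier_vec m" "i < n"
  shows "(A *\<^sub>v v) $ i = (\<Sum>k<m. A $$ (i,k) * v $ k)"
  using assms by (auto simp: scalar_prod_def intro!: sum.cong)

lemma adj_carrier: "A \<in> carrier_mat n m \<Longrightarrow> mat_adjoint A \<in> carrier_mat m n"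
  by (auto simp: mat_adjoint_def)

lemma adj_index: "A \<in> carrier_mat n m \<Longrightarrow> i < m \<Longrightarrow> j < n \<Longrightarrow> mat_adjoint A $$ (i,j) = cnj (A $$ (j,i))"
  by (auto simp: mat_adjoint_def mat_of_rows_def)

lemma herm_entry:
  assumes "A \<in> carrier_mat n n" "mat_adjoint A = A" "i < n" "j < n"
  shows "A $$ (j,i) = cnj (A $$ (i,j))"
proof -
  have "mat_adjoint A $$ (j,i) = cnj (A $$ (i,j))" using adj_index[OF assms(1) assms(4) assms(3)] .
  thus ?thesis unfolding assms(2) .
qed

lemma hermI:
  assumes "A \<in> carrier_mat n n" "\<And>i j. i < n \<Longrightarrow> j < n \<Longrightarrow> A $$ (j,i) = cnj (A $$ (i,j))"
  shows "mat_adjoint A = A"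
proof (rule eq_matI)
  fix i j assume i: "i < dim_row A" and j: "j < dim_col A"
  hence "i < n" "j < n" using assms(1) by auto
  thus "mat_adjoint A $$ (i,j) = A $$ (i,j)" using adj_index[OF assms(1)] assms(2)[of j i] by simp
qed (insert adj_carrier[OF assms(1)] assms(1), auto)

lemma schur_carrier: "A \<in> carrier_mat n m \<Longrightarrow> schur_prod A B \<in> carrier_mat n m"
  by (auto simp: schur_prod_def)

lemma schur_index: "A \<in> carrier_mat n m \<Longrightarrow> i < n \<Longrightarrow> j < m \<Longrightarrow> schur_prod A B $$ (i,j) = A $$ (i,j) * B $$ (i,j)"
  by (auto simp: schur_prod_def)

lemma cmod1_cnj: "cmod z = 1 \<Longrightarrow> cnj z * z = 1"
proof -
  assume "cmod z = 1"
  hence "z * cnj z = 1" using complex_norm_square[of z] by simp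
  thus ?thesis by (simp add: mult.commute)
qed

lemma cnj_mult1_cmod: "z * cnj z = 1 \<Longrightarrow> cmod z = 1"
proof -
  assume "z * cnj z = 1"
  hence "complex_of_real ((cmod z)^2) = 1" using complex_norm_square[of z] by simp
  hence "(cmod z)^2 = 1" using of_real_eq_1_iff by blast
  thus ?thesis using norm_ge_zero[of z] by (auto simp: power2_eq_1_iff)
qed

definition isP :: "complex mat \<Rightarrow> nat \<Rightarrow> bool" where
  "isP A n \<longleftrightarrow> (\<exists>d. (\<forall>i<n. cmod (d i) = 1) \<and> (\<forall>i<n. \<forall>j<n. A $$ (i,j) = d i * cnj (d j)))"

lemma M_to_P:
  assumes A: "A \<in> carrier_mat n n" and n: "n \<ge> 1"
    and diag: "\<forall>i<n. A $$ (i,i) = 1" and H: "mat_adjoint A = A"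
    and mult: "\<forall>i<n. \<forall>j<n. \<forall>k<n. A $$ (i,j) * A $$ (j,k) = A $$ (i,k)"
  shows "isP A n"
  unfolding isP_def
proof (intro exI[of _ "\<lambda>i. A $$ (i,0)"] conjI allI impI)
  have 0: "0 < n" using n by auto
  fix i assume i: "i < n"
  have "A $$ (i,0) * cnj (A $$ (i,0)) = A $$ (i,0) * A $$ (0,i)"
    using herm_entry[OF A H 0 i] by simp
  also have "\<dots> = 1" using mult i 0 diag by auto
  finally show "cmod (A $$ (i,0)) = 1" by (rule cnj_mult1_cmod)
  fix j assume j: "j < n"
  show "A $$ (i,j) = A $$ (i,0) * cnj (A $$ (j,0))"
  proof -
    have "A $$ (i,j) = A $$ (i,0) * A $$ (0,j)" using mult i j 0 by auto
    thus ?thesis using herm_entry[OF A H j 0] by simp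
  qed
qed

lemma P_entry:
  assumes "isP A n" obtains d where "\<forall>i<n. cmod (d i) = 1" "\<forall>i<n. \<forall>j<n. A $$ (i,j) = d i * cnj (d j)"
  using assms unfolding isP_def by blast

lemma P_props:
  assumes A: "A \<in> carrier_mat n n" and P: "isP A n"
  shows "mat_adjoint A = A" "\<forall>i<n. A $$ (i,i) = 1"
    "\<forall>i<n. \<forall>j<n. \<forall>k<n. A $$ (i,j) * A $$ (j,k) = A $$ (i,k)"
    "\<forall>i<n. \<forall>j<n. cmod (A $$ (i,j)) = 1"
proof -
  obtain d where d1: "\<forall>i<n. cmod (d i) = 1" and d: "\<forall>i<n. \<forall>j<n. A $$ (i,j) = d i * cnj (d j)"
    using P_entry[OF P] by blast
  have c: "cnj (d i) * d i = 1" if "i < n" for i using cmod1_cnj d1 that by auto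
  show "mat_adjoint A = A" by (rule hermI[OF A], auto simp: d)
  show "\<forall>i<n. A $$ (i,i) = 1" using c d by (simp add: mult.commute)
  show "\<forall>i<n. \<forall>j<n. \<forall>k<n. A $$ (i,j) * A $$ (j,k) = A $$ (i,k)"
  proof (intro allI impI)
    fix i j k assume "i < n" "j < n" "k < n"
    have "A $$ (i,j) * A $$ (j,k) = d i * (cnj (d j) * d j) * cnj (d k)" using d \<open>i<n\<close> \<open>j<n\<close> \<open>k<n\<close>
      by (simp add: mult.assoc)
    thus "A $$ (i,j) * A $$ (j,k) = A $$ (i,k)" using c[of j] d \<open>i<n\<close> \<open>j<n\<close> \<open>k<n\<close> by simp
  qed
  show "\<forall>i<n. \<forall>j<n. cmod (A $$ (i,j)) = 1" using d d1 by (simp add: norm_mult)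
qed

definition EU :: "nat \<Rightarrow> nat \<Rightarrow> nat \<Rightarrow> complex mat" where
  "EU n i j = mat n n (\<lambda>(r,s). if r = i \<and> s = j then 1 else 0)"
definition Jm :: "nat \<Rightarrow> complex mat" where "Jm n = mat n n (\<lambda>_. 1)"

lemma EU_carrier[simp]: "EU n i j \<in> carrier_mat n n" by (simp add: EU_def)
lemma Jm_carrier[simp]: "Jm n \<in> carrier_mat n n" by (simp add: Jm_def)

lemma mult_from_hom:
  assumes A: "A \<in> carrier_mat n n"
    and hom: "\<forall>B\<in>carrier_mat n n. \<forall>C\<in>carrier_mat n n. schur_prod A (B * C) = schur_prod A B * schur_prod A C"
    and i: "i < n" and j: "j < n" and k: "k < n"
  shows "A $$ (i,j) * A $$ (j,k) = A $$ (i,k)"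
proof -
  have e: "schur_prod A (EU n i j * EU n j k) = schur_prod A (EU n i j) * schur_prod A (EU n j k)"
    using hom by auto
  have "schur_prod A (EU n i j * EU n j k) $$ (i,k) = A $$ (i,k) * (\<Sum>l<n. EU n i j $$ (i,l) * EU n j k $$ (l,k))"
    using A i k by (simp add: schur_index mult_index[of _ n n _ n])
  also have "(\<Sum>l<n. EU n i j $$ (i,l) * EU n j k $$ (l,k)) = (\<Sum>l<n. if l = j then 1 else 0)"
    using i k by (intro sum.cong, auto simp: EU_def)
  also have "\<dots> = 1" using j by simp
  finally have 1: "schur_prod A (EU n i j * EU n j k) $$ (i,k) = A $$ (i,k)" by simp
  have "(schur_prod A (EU n i j) * schur_prod A (EU n j k)) $$ (i,k)
     = (\<Sum>l<n. schur_prod A (EU n i j) $$ (i,l) * schur_prod A (EU n j k) $$ (l,k))"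
    using A i k by (intro mult_index, auto intro: schur_carrier)
  also have "\<dots> = (\<Sum>l<n. if l = j then A $$ (i,j) * A $$ (j,k) else 0)"
    using A i k by (intro sum.cong, auto simp: EU_def schur_index)
  also have "\<dots> = A $$ (i,j) * A $$ (j,k)" using j by simp
  finally show ?thesis using 1 e by simp
qed

lemma schur_Jm: "A \<in> carrier_mat n n \<Longrightarrow> schur_prod A (Jm n) = A"
  by (rule eq_matI, auto simp: schur_prod_def Jm_def)

lemma Jm_herm: "mat_adjoint (Jm n) = Jm n"
  by (rule hermI[of _ n], auto simp: Jm_def)

lemma i_to_P:
  assumes A: "A \<in> carrier_mat n n" and n: "n \<ge> 1" and diag: "\<forall>i<n. A $$ (i,i) = 1"
    and hom: "\<forall>B\<in>carrier_mat n n. \<forall>C\<in>carrier_mat n n. schur_prod A (B * C) = schur_prod A B * schur_prod A C"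
    and adj: "\<forall>B\<in>carrier_mat n n. schur_prod A (mat_adjoint B) = mat_adjoint (schur_prod A B)"
  shows "isP A n"
proof (rule M_to_P[OF A n diag])
  have "schur_prod A (mat_adjoint (Jm n)) = mat_adjoint (schur_prod A (Jm n))" using adj by auto
  thus "mat_adjoint A = A" unfolding Jm_herm schur_Jm[OF A] by simp
  show "\<forall>i<n. \<forall>j<n. \<forall>k<n. A $$ (i, j) * A $$ (j, k) = A $$ (i, k)"
    using mult_from_hom[OF A hom] by blast
qed

lemma P_hom:
  assumes A: "A \<in> carrier_mat n n" and P: "isP A n"
  shows "\<forall>B\<in>carrier_mat n n. \<forall>C\<in>carrier_mat n n. schur_prod A (B * C) = schur_prod A B * schur_prod A C"
proof (intro ballI)
  note pp = P_props[OF A P]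
  fix B C :: "complex mat" assume B: "B \<in> carrier_mat n n" and C: "C \<in> carrier_mat n n"
  show "schur_prod A (B * C) = schur_prod A B * schur_prod A C"
  proof (rule eq_matI)
    fix i k assume "i < dim_row (schur_prod A B * schur_prod A C)" "k < dim_col (schur_prod A B * schur_prod A C)"
    hence i: "i < n" and k: "k < n" using A by (auto simp: schur_prod_def)
    have "schur_prod A (B * C) $$ (i,k) = A $$ (i,k) * (\<Sum>j<n. B $$ (i,j) * C $$ (j,k))"
      using A B C i k by (simp add: schur_index mult_index[OF B C i k] del: index_mult_mat)
    also have "\<dots> = (\<Sum>j<n. (A $$ (i,j) * B $$ (i,j)) * (A $$ (j,k) * C $$ (j,k)))"
      unfolding sum_distrib_left
    proof (rule sum.cong)
      fix j assume "j \<in> {..<n}"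
      hence "A $$ (i,k) = A $$ (i,j) * A $$ (j,k)" using pp(3) i k by auto
      thus "A $$ (i,k) * (B $$ (i,j) * C $$ (j,k)) = (A $$ (i,j) * B $$ (i,j)) * (A $$ (j,k) * C $$ (j,k))"
        by (simp add: ac_simps)
    qed simp
    also have "\<dots> = (schur_prod A B * schur_prod A C) $$ (i,k)"
      using A B C i k by (subst mult_index[of _ n n _ n], auto intro: schur_carrier intro!: sum.cong simp: schur_index)
    finally show "schur_prod A (B * C) $$ (i,k) = (schur_prod A B * schur_prod A C) $$ (i,k)" .
  qed (insert A, auto simp: schur_prod_def)
qed

lemma P_adj:
  assumes A: "A \<in> carrier_mat n n" and P: "isP A n"
  shows "\<forall>B\<in>carrier_mat n n. schur_prod A (mat_adjoint B) = mat_adjoint (schur_prod A B)"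
proof -
  note pp = P_props[OF A P]
  show "\<forall>B\<in>carrier_mat n n. schur_prod A (mat_adjoint B) = mat_adjoint (schur_prod A B)"
  proof
    fix B :: "complex mat" assume B: "B \<in> carrier_mat n n"
    have SB: "schur_prod A B \<in> carrier_mat n n" using A by (rule schur_carrier)
    show "schur_prod A (mat_adjoint B) = mat_adjoint (schur_prod A B)"
    proof (rule eq_matI)
      fix i j assume "i < dim_row (mat_adjoint (schur_prod A B))" "j < dim_col (mat_adjoint (schur_prod A B))"
      hence i: "i < n" and j: "j < n" using adj_carrier[OF SB] by auto
      have "schur_prod A (mat_adjoint B) $$ (i,j) = A $$ (i,j) * cnj (B $$ (j,i))"
        using A B i j by (simp add: schur_index adj_index)
      also have "\<dots> = cnj (A $$ (j,i) * B $$ (j,i))" using herm_entry[OF A pp(1) i j] by simp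
      also have "\<dots> = mat_adjoint (schur_prod A B) $$ (i,j)"
        using A SB i j by (simp add: schur_index adj_index)
      finally show "schur_prod A (mat_adjoint B) $$ (i,j) = mat_adjoint (schur_prod A B) $$ (i,j)" .
    qed (insert A adj_carrier[OF SB], auto simp: schur_prod_def)
  qed
qed

lemma vec_nonzero_entry:
  assumes "v \<in> carrier_vec n" "v \<noteq> 0\<^sub>v n" obtains i where "i < n" "v $ i \<noteq> 0"
proof -
  have "\<exists>i<n. v $ i \<noteq> 0"
  proof (rule ccontr)
    assume "\<not> ?thesis"
    hence "v = 0\<^sub>v n" using assms(1) by (intro eq_vecI, auto)
    thus False using assms(2) by simp
  qed
  thus ?thesis using that by blast
qed

lemma eigenvectorE:
  assumes "z \<in> spectrum M" "M \<in> carrier_mat n n"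
  obtains v where "v \<in> carrier_vec n" "v \<noteq> 0\<^sub>v n" "M *\<^sub>v v = z \<cdot>\<^sub>v v"
  using assms unfolding spectrum_def eigenvalue_def eigenvector_def by auto

lemma eigenvectorI:
  assumes "M \<in> carrier_mat n n" "v \<in> carrier_vec n" "v \<noteq> 0\<^sub>v n" "M *\<^sub>v v = z \<cdot>\<^sub>v v"
  shows "z \<in> spectrum M"
  using assms unfolding spectrum_def eigenvalue_def eigenvector_def by auto

lemma P_spec:
  assumes A: "A \<in> carrier_mat n n" and P: "isP A n"
  shows "spectrum A \<subseteq> {0, of_nat n}"
proof
  fix z assume z: "z \<in> spectrum A"
  obtain d where d1: "\<forall>i<n. cmod (d i) = 1" and d: "\<forall>i<n. \<forall>j<n. A $$ (i,j) = d i * cnj (d j)"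
    using P_entry[OF P] by blast
  obtain v where v: "v \<in> carrier_vec n" and v0: "v \<noteq> 0\<^sub>v n" and ev: "A *\<^sub>v v = z \<cdot>\<^sub>v v"
    using eigenvectorE[OF z A] by blast
  define s where "s = (\<Sum>j<n. cnj (d j) * v $ j)"
  have Av: "(A *\<^sub>v v) $ i = d i * s" if i: "i < n" for i
    using mult_vec_index[OF A v i] d i unfolding s_def sum_distrib_left
    by (auto intro!: sum.cong simp: ac_simps)
  have zv: "z * v $ i = d i * s" if i: "i < n" for i
    using Av[OF i] ev v i by (metis carrier_vecD index_smult_vec(1))
  have "(\<Sum>i<n. cnj (d i) * (z * v $ i)) = z * s"
    unfolding s_def sum_distrib_left by (auto intro!: sum.cong simp: ac_simps)
  moreover have "(\<Sum>i<n. cnj (d i) * (z * v $ i)) = of_nat n * s"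
    using zv d1 cmod1_cnj by (simp add: mult.assoc[symmetric])
  ultimately have zs: "z * s = of_nat n * s" by metis
  show "z \<in> {0, of_nat n}"
  proof (cases "s = 0")
    case False hence "z = of_nat n" using zs by simp
    thus ?thesis by simp
  next
    case True
    obtain i where i: "i < n" "v $ i \<noteq> 0" using vec_nonzero_entry[OF v v0] by blast
    have "z * v $ i = 0" using zv[OF i(1)] True by simp
    thus ?thesis using i by simp
  qed
qed

lemma P_pos:
  assumes A: "A \<in> carrier_mat n n" and P: "isP A n"
  shows "positive_mat A"
  unfolding positive_mat_def using A P_props(1)[OF A P] P_spec[OF A P] by auto

lemma Pos_schur:
  assumes B: "B \<in> carrier_mat m m" and P: "isP B m" and X: "X \<in> carrier_mat m m" and pos: "positive_mat X"
  shows "positive_mat (schur_prod B X)"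
proof -
  obtain d where d1: "\<forall>i<m. cmod (d i) = 1" and d: "\<forall>i<m. \<forall>j<m. B $$ (i,j) = d i * cnj (d j)"
    using P_entry[OF P] by blast
  have c: "cnj (d i) * d i = 1" if "i < m" for i using cmod1_cnj d1 that by auto
  have XH: "mat_adjoint X = X" using pos unfolding positive_mat_def by auto
  have BH: "mat_adjoint B = B" using P_props[OF B P] by auto
  have S: "schur_prod B X \<in> carrier_mat m m" using B by (rule schur_carrier)
  have H: "mat_adjoint (schur_prod B X) = schur_prod B X"
  proof (rule hermI[OF S])
    fix i j assume i: "i < m" and j: "j < m"
    show "schur_prod B X $$ (j,i) = cnj (schur_prod B X $$ (i,j))"
      using B i j herm_entry[OF B BH i j] herm_entry[OF X XH i j] by (simp add: schur_index)
  qed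
  have spec: "z \<in> spectrum X" if z: "z \<in> spectrum (schur_prod B X)" for z
  proof -
    obtain v where v: "v \<in> carrier_vec m" and v0: "v \<noteq> 0\<^sub>v m" and ev: "schur_prod B X *\<^sub>v v = z \<cdot>\<^sub>v v"
      using eigenvectorE[OF z S] by blast
    define w where "w = vec m (\<lambda>i. cnj (d i) * v $ i)"
    have w: "w \<in> carrier_vec m" unfolding w_def by simp
    have e1: "(schur_prod B X *\<^sub>v v) $ i = d i * (X *\<^sub>v w) $ i" if i: "i < m" for i
      using mult_vec_index[OF S v i] mult_vec_index[OF X w i] i d B
      unfolding w_def by (auto intro!: sum.cong simp: sum_distrib_left schur_index ac_simps)
    have "X *\<^sub>v w = z \<cdot>\<^sub>v w"
    proof (rule eq_vecI)
      fix i assume "i < dim_vec (z \<cdot>\<^sub>v w)"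
      hence i: "i < m" using w by auto
      have "d i * (X *\<^sub>v w) $ i = z * v $ i" using e1[OF i] ev v i by (metis carrier_vecD index_smult_vec(1))
      hence "cnj (d i) * (d i * (X *\<^sub>v w) $ i) = cnj (d i) * (z * v $ i)" by simp
      moreover have "cnj (d i) * (d i * (X *\<^sub>v w) $ i) = (X *\<^sub>v w) $ i"
        using c[OF i] by (simp add: mult.assoc[symmetric])
      moreover have "cnj (d i) * (z * v $ i) = z * w $ i" using i unfolding w_def by simp
      ultimately have "(X *\<^sub>v w) $ i = z * w $ i" by simp
      thus "(X *\<^sub>v w) $ i = (z \<cdot>\<^sub>v w) $ i" using i w by simp
    qed (insert X w, auto)
    moreover have "w \<noteq> 0\<^sub>v m"
    proof
      assume "w = 0\<^sub>v m"
      obtain i where i: "i < m" "v $ i \<noteq> 0" using vec_nonzero_entry[OF v v0] by blast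
      have "w $ i = 0" using \<open>w = 0\<^sub>v m\<close> i by simp
      hence "cnj (d i) * v $ i = 0" using i unfolding w_def by simp
      moreover have "cnj (d i) \<noteq> 0" using d1 i by auto
      ultimately show False using i by simp
    qed
    ultimately show ?thesis using eigenvectorI[OF X w] by blast
  qed
  show ?thesis using pos spec H S unfolding positive_mat_def by auto
qed

lemma ampl_schur:
  assumes n: "n \<ge> 1" and A: "A \<in> carrier_mat n n" and X: "X \<in> carrier_mat (k*n) (k*n)"
  shows "ampl k n (schur_prod A) X = schur_prod (mat (k*n) (k*n) (\<lambda>(i,j). A $$ (i mod n, j mod n))) X"
proof (rule eq_matI)
  fix i j assume "i < dim_row (schur_prod (mat (k*n) (k*n) (\<lambda>(i,j). A $$ (i mod n, j mod n))) X)"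
    "j < dim_col (schur_prod (mat (k*n) (k*n) (\<lambda>(i,j). A $$ (i mod n, j mod n))) X)"
  hence i: "i < k*n" and j: "j < k*n" by (auto simp: schur_prod_def)
  have im: "i mod n < n" "j mod n < n" using n by auto
  have "ampl k n (schur_prod A) X $$ (i,j) = schur_prod A (block_of n X (i div n) (j div n)) $$ (i mod n, j mod n)"
    using i j by (simp add: ampl_def)
  also have "\<dots> = A $$ (i mod n, j mod n) * X $$ (i div n * n + i mod n, j div n * n + j mod n)"
    using A im by (simp add: schur_index block_of_def)
  also have "\<dots> = A $$ (i mod n, j mod n) * X $$ (i, j)" by simp
  finally show "ampl k n (schur_prod A) X $$ (i,j) = schur_prod (mat (k*n) (k*n) (\<lambda>(i,j). A $$ (i mod n, j mod n))) X $$ (i,j)"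
    using i j by (simp add: schur_prod_def)
qed (auto simp: ampl_def schur_prod_def)

lemma P_mod:
  assumes n: "n \<ge> 1" and P: "isP A n"
  shows "isP (mat (k*n) (k*n) (\<lambda>(i,j). A $$ (i mod n, j mod n))) (k*n)"
proof -
  obtain d where d1: "\<forall>i<n. cmod (d i) = 1" and d: "\<forall>i<n. \<forall>j<n. A $$ (i,j) = d i * cnj (d j)"
    using P_entry[OF P] by blast
  have im: "i mod n < n" for i using n by auto
  show ?thesis unfolding isP_def
    by (intro exI[of _ "\<lambda>i. d (i mod n)"], insert d1 d im, auto)
qed

lemma P_CP:
  assumes n: "n \<ge> 1" and A: "A \<in> carrier_mat n n" and P: "isP A n"
  shows "completely_positive n (schur_prod A)"
  unfolding completely_positive_def positive_map_on_def
proof (intro allI ballI impI)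
  fix k X assume X: "X \<in> carrier_mat (k*n) (k*n)" and pos: "positive_mat X"
  show "positive_mat (ampl k n (schur_prod A) X)"
    unfolding ampl_schur[OF n A X]
    by (rule Pos_schur[OF _ P_mod[OF n P] X pos], simp)
qed

lemma P_iso:
  assumes A: "A \<in> carrier_mat n n" and P: "isP A n"
  shows "algebra_iso n (schur_prod A)"
proof -
  note pp = P_props[OF A P]
  define A' where "A' = mat n n (\<lambda>(i,j). cnj (A $$ (i,j)))"
  have A': "A' \<in> carrier_mat n n" unfolding A'_def by simp
  have c: "cnj (A $$ (i,j)) * A $$ (i,j) = 1" if "i < n" "j < n" for i j
    using cmod1_cnj pp(4) that by auto
  have inv1: "schur_prod A' (schur_prod A B) = B" if B: "B \<in> carrier_mat n n" for B
  proof (rule eq_matI)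
    fix i j assume "i < dim_row B" "j < dim_col B"
    hence i: "i < n" and j: "j < n" using B by auto
    show "schur_prod A' (schur_prod A B) $$ (i,j) = B $$ (i,j)"
      using A A' i j c[OF i j] by (simp add: schur_index mult.assoc[symmetric]) (simp add: A'_def)
  qed (insert A' B, auto simp: schur_prod_def)
  have inv2: "schur_prod A (schur_prod A' B) = B" if B: "B \<in> carrier_mat n n" for B
  proof (rule eq_matI)
    fix i j assume "i < dim_row B" "j < dim_col B"
    hence i: "i < n" and j: "j < n" using B by auto
    show "schur_prod A (schur_prod A' B) $$ (i,j) = B $$ (i,j)"
      using A A' i j c[OF i j] by (simp add: schur_index mult.assoc[symmetric]) (simp add: A'_def mult.commute)
  qed (insert A B, auto simp: schur_prod_def)
  have bij: "bij_betw (schur_prod A) (carrier_mat n n) (carrier_mat n n)"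
    by (rule bij_betwI[of _ _ _ "schur_prod A'"], insert inv1 inv2 A A', auto intro: schur_carrier)
  have add: "schur_prod A (B + C) = schur_prod A B + schur_prod A C"
    if B: "B \<in> carrier_mat n n" and C: "C \<in> carrier_mat n n" for B C
    by (rule eq_matI, insert A B C, auto simp: schur_prod_def ring_distribs)
  have sm: "schur_prod A (c \<cdot>\<^sub>m B) = c \<cdot>\<^sub>m schur_prod A B"
    if B: "B \<in> carrier_mat n n" for B c
    by (rule eq_matI, insert A B, auto simp: schur_prod_def ac_simps)
  show ?thesis unfolding algebra_iso_def using bij add sm P_hom[OF A P] by auto
qed

lemma Jm_P: "isP (Jm n) n"
  unfolding isP_def by (intro exI[of _ "\<lambda>_. 1"], auto simp: Jm_def)

lemma ii_to_P:
  assumes n: "n \<ge> 1" and A: "A \<in> carrier_mat n n" and diag: "\<forall>i<n. A $$ (i,i) = 1"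
    and cp: "completely_positive n (schur_prod A)" and iso: "algebra_iso n (schur_prod A)"
  shows "isP A n"
proof (rule M_to_P[OF A n diag])
  have hom: "\<forall>B\<in>carrier_mat n n. \<forall>C\<in>carrier_mat n n. schur_prod A (B * C) = schur_prod A B * schur_prod A C"
    using iso unfolding algebra_iso_def by auto
  show "\<forall>i<n. \<forall>j<n. \<forall>k<n. A $$ (i, j) * A $$ (j, k) = A $$ (i, k)"
    using mult_from_hom[OF A hom] by blast
  have pm: "positive_map_on (1*n) (ampl 1 n (schur_prod A))" using cp unfolding completely_positive_def by blast
  have J: "Jm n \<in> carrier_mat (1*n) (1*n)" by simp
  have "positive_mat (ampl 1 n (schur_prod A) (Jm n))"
    using pm J P_pos[OF _ Jm_P] unfolding positive_map_on_def by auto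
  moreover have "ampl 1 n (schur_prod A) (Jm n) = A"
    unfolding ampl_schur[OF n A J]
    by (rule eq_matI, insert A, auto simp: schur_prod_def Jm_def)
  ultimately show "mat_adjoint A = A" unfolding positive_mat_def by auto
qed

lemma rank_ge_list:
  fixes A :: "complex mat"
  assumes A: "A \<in> carrier_mat n n" and ws: "set ws \<subseteq> set (cols A)" and dist: "distinct ws"
    and indep: "\<And>v. v \<in> carrier_vec (length ws) \<Longrightarrow> mat_of_cols n ws *\<^sub>v v = 0\<^sub>v n \<Longrightarrow> v = 0\<^sub>v (length ws)"
  shows "vec_space.rank n A \<ge> length ws"
proof -
  interpret vec_space "TYPE(complex)" n .
  have wsc: "set ws \<subseteq> carrier_vec n" using ws A cols_dim by blast
  let ?M = "mat_of_cols n ws"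
  have M: "?M \<in> carrier_mat n (length ws)" by simp
  have cM: "cols ?M = ws" using wsc by simp
  have li: "\<not> lin_dep (set ws)"
  proof
    assume "lin_dep (set ws)"
    hence "lin_dep (set (cols ?M))" unfolding cM .
    from lin_depE[OF M this] obtain v where "v \<in> carrier_vec (length ws)" "v \<noteq> 0\<^sub>v (length ws)" "?M *\<^sub>v v = 0\<^sub>v n"
      using dist cM by metis
    thus False using indep by blast
  qed
  have "rank A \<ge> card (set ws)" by (rule rank_ge_card_indpt[OF A ws li])
  thus ?thesis using distinct_card[OF dist] by simp
qed

lemma vec2_eq0: "v \<in> carrier_vec 2 \<Longrightarrow> v $ 0 = 0 \<Longrightarrow> v $ 1 = 0 \<Longrightarrow> v = 0\<^sub>v 2"
  by (rule eq_vecI, auto simp: less_2_cases_iff)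

lemma vec1_eq0: "v \<in> carrier_vec 1 \<Longrightarrow> v $ 0 = 0 \<Longrightarrow> v = 0\<^sub>v 1"
  by (rule eq_vecI, auto)

lemma mult_rank1:
  fixes A :: "complex mat"
  assumes A: "A \<in> carrier_mat n n" and n: "n \<ge> 1" and diag: "\<forall>i<n. A $$ (i,i) = 1"
    and mult: "\<forall>i<n. \<forall>j<n. \<forall>k<n. A $$ (i,j) * A $$ (j,k) = A $$ (i,k)"
  shows "vec_space.rank n A = 1"
proof -
  have 0: "0 < n" using n by auto
  have le: "vec_space.rank n A \<le> 1"
    by (rule vec_space.rank_le_1_product_entries[OF A, of "\<lambda>r. A $$ (r,0)" "\<lambda>c. A $$ (0,c)"],
        insert A mult 0, auto)
  have c0: "col A 0 \<in> set (cols A)" using A 0 by (simp add: cols_def)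
  have ge: "vec_space.rank n A \<ge> length [col A 0]"
  proof (rule rank_ge_list[OF A])
    fix v :: "complex vec" assume v: "v \<in> carrier_vec (length [col A 0])"
      and Mv: "mat_of_cols n [col A 0] *\<^sub>v v = 0\<^sub>v n"
    have "(mat_of_cols n [col A 0] *\<^sub>v v) $ 0 = A $$ (0,0) * v $ 0"
      using mult_vec_index[OF mat_of_cols_carrier(1)[of n "[col A 0]"] v, of 0] 0 A by (simp add: mat_of_cols_index)
    hence "v $ 0 = 0" using Mv diag 0 by simp
    thus "v = 0\<^sub>v (length [col A 0])" using v vec1_eq0 by simp
  qed (insert c0, auto)
  show ?thesis using le ge by simp
qed

lemma rank1_mult:
  fixes A :: "complex mat"
  assumes A: "A \<in> carrier_mat n n" and diag: "\<forall>i<n. A $$ (i,i) = 1"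
    and r: "vec_space.rank n A = 1" and i: "i < n" and j: "j < n" and k: "k < n"
  shows "A $$ (j,i) * A $$ (i,k) = A $$ (j,k)"
proof (cases "col A i = col A k")
  case True
  have "A $$ (r,i) = A $$ (r,k)" if "r < n" for r
    using arg_cong[OF True, of "\<lambda>v. v $ r"] that i k A by simp
  thus ?thesis using i j diag by auto
next
  case False
  have ci: "col A i \<in> set (cols A)" "col A k \<in> set (cols A)" using A i k by (auto simp: cols_def)
  have Mv: "(mat_of_cols n [col A i, col A k] *\<^sub>v v) $ r = v $ 0 * A $$ (r,i) + v $ 1 * A $$ (r,k)"
    if v: "v \<in> carrier_vec 2" and rr: "r < n" for v r
  proof -
    have M2: "mat_of_cols n [col A i, col A k] \<in> carrier_mat n 2"
      using mat_of_cols_carrier(1)[of n "[col A i, col A k]"] by (simp add: numeral_2_eq_2)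
    have "(mat_of_cols n [col A i, col A k] *\<^sub>v v) $ r = (\<Sum>l<2. mat_of_cols n [col A i, col A k] $$ (r,l) * v $ l)"
      by (rule mult_vec_index[OF M2 v rr])
    also have "\<dots> = v $ 0 * A $$ (r,i) + v $ 1 * A $$ (r,k)"
      using rr A i k by (simp add: numeral_2_eq_2 mat_of_cols_index)
    finally show ?thesis .
  qed
  have "\<not> vec_space.rank n A \<ge> length [col A i, col A k]" using r by simp
  hence "\<exists>v. v \<in> carrier_vec 2 \<and> mat_of_cols n [col A i, col A k] *\<^sub>v v = 0\<^sub>v n \<and> v \<noteq> 0\<^sub>v 2"
    using rank_ge_list[OF A, of "[col A i, col A k]"] ci False unfolding numeral_2_eq_2 by force
  then obtain v where v: "v \<in> carrier_vec 2" and Mv0: "mat_of_cols n [col A i, col A k] *\<^sub>v v = 0\<^sub>v n"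
    and v0: "v \<noteq> 0\<^sub>v 2" by blast
  have eq: "v $ 0 * A $$ (r,i) + v $ 1 * A $$ (r,k) = 0" if "r < n" for r
    using Mv[OF v that] Mv0 that by simp
  have "v $ 0 + v $ 1 * A $$ (i,k) = 0" using eq[OF i] diag i by simp
  have v1: "v $ 1 \<noteq> 0"
  proof
    assume "v $ 1 = 0"
    hence "v $ 0 = 0" using \<open>v $ 0 + v $ 1 * A $$ (i,k) = 0\<close> by simp
    thus False using vec2_eq0[OF v _ \<open>v $ 1 = 0\<close>] v0 by simp
  qed
  have ik: "A $$ (i,k) = - v $ 0 / v $ 1" using \<open>v $ 0 + v $ 1 * A $$ (i,k) = 0\<close> v1
    by (simp add: field_simps add_eq_0_iff)
  have "A $$ (j,k) = - v $ 0 / v $ 1 * A $$ (j,i)" using eq[OF j] v1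
    by (simp add: field_simps add_eq_0_iff)
  thus ?thesis using ik by simp
qed

lemma herm_from_unimod:
  assumes A: "A \<in> carrier_mat n n" and diag: "\<forall>i<n. A $$ (i,i) = 1"
    and mult: "\<forall>i<n. \<forall>j<n. \<forall>k<n. A $$ (i,j) * A $$ (j,k) = A $$ (i,k)"
    and um: "\<forall>i<n. \<forall>j<n. cmod (A $$ (i,j)) = 1"
  shows "mat_adjoint A = A"
proof (rule hermI[OF A])
  fix i j assume i: "i < n" and j: "j < n"
  have 1: "A $$ (i,j) * A $$ (j,i) = 1" using mult diag i j by auto
  have 2: "A $$ (i,j) * cnj (A $$ (i,j)) = 1" using cmod1_cnj[of "A $$ (i,j)"] um i j by (simp add: mult.commute)
  have "A $$ (i,j) \<noteq> 0" using 1 by auto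
  thus "A $$ (j,i) = cnj (A $$ (i,j))" using 1 2 by (metis mult_left_cancel)
qed

lemma iv_to_P:
  assumes A: "A \<in> carrier_mat n n" and n: "n \<ge> 1" and diag: "\<forall>i<n. A $$ (i,i) = 1"
    and r: "vec_space.rank n A = 1" and um: "\<forall>i<n. \<forall>j<n. cmod (A $$ (i,j)) = 1"
  shows "isP A n"
proof -
  have mult: "\<forall>i<n. \<forall>j<n. \<forall>k<n. A $$ (i,j) * A $$ (j,k) = A $$ (i,k)"
    using rank1_mult[OF A diag r] by blast
  show ?thesis by (rule M_to_P[OF A n diag herm_from_unimod[OF A diag mult um] mult])
qed

lemma sum_cnj_sq: "(\<Sum>j\<in>S. f j * cnj (f j)) = complex_of_real (\<Sum>j\<in>S. (cmod (f j))^2)"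
  unfolding of_real_sum by (rule sum.cong, simp, rule complex_norm_square[symmetric])

lemma iii_to_P:
  assumes A: "A \<in> carrier_mat n n" and n: "n \<ge> 1" and diag: "\<forall>i<n. A $$ (i,i) = 1"
    and r: "vec_space.rank n A = 1" and nor: "A * mat_adjoint A = mat_adjoint A * A"
  shows "isP A n"
proof -
  have 0: "0 < n" using n by auto
  have mult: "\<forall>i<n. \<forall>j<n. \<forall>k<n. A $$ (i,j) * A $$ (j,k) = A $$ (i,k)"
    using rank1_mult[OF A diag r] by blast
  define R where "R i = (cmod (A $$ (i,0)))^2" for i
  have inv: "A $$ (0,j) * A $$ (j,0) = 1" if "j < n" for j using mult diag that 0 by auto
  have Rpos: "R i > 0" if "i < n" for i
    using inv[OF that] unfolding R_def by (auto simp: mult.commute)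
  have R0: "R 0 = 1" using diag 0 unfolding R_def by simp
  have sq: "(cmod (A $$ (i,j)))^2 = R i / R j" if i: "i < n" and j: "j < n" for i j
  proof -
    have "A $$ (i,j) = A $$ (i,0) * A $$ (0,j)" using mult i j 0 by auto
    moreover have "cmod (A $$ (0,j)) * cmod (A $$ (j,0)) = 1" using inv[OF j]
      by (metis norm_mult norm_one)
    ultimately have "cmod (A $$ (i,j)) = cmod (A $$ (i,0)) / cmod (A $$ (j,0))"
      using Rpos[OF j] unfolding R_def by (simp add: norm_mult field_simps)
    thus ?thesis unfolding R_def by (simp add: power_divide)
  qed
  define S1 where "S1 = (\<Sum>j<n. 1 / R j)"
  define S2 where "S2 = (\<Sum>j<n. R j)"
  have S1pos: "S1 > 0" unfolding S1_def using Rpos 0 by (intro sum_pos, auto)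
  have key: "R i * S1 = S2 / R i" if i: "i < n" for i
  proof -
    have AH: "mat_adjoint A \<in> carrier_mat n n" using adj_carrier[OF A] .
    have "(A * mat_adjoint A) $$ (i,i) = (\<Sum>j<n. A $$ (i,j) * cnj (A $$ (i,j)))"
      using mult_index[OF A AH i i] adj_index[OF A] i by simp
    also have "\<dots> = complex_of_real (\<Sum>j<n. R i / R j)"
      unfolding sum_cnj_sq using sq i by simp
    finally have 1: "(A * mat_adjoint A) $$ (i,i) = complex_of_real (\<Sum>j<n. R i / R j)" .
    have "(mat_adjoint A * A) $$ (i,i) = (\<Sum>j<n. A $$ (j,i) * cnj (A $$ (j,i)))"
      using mult_index[OF AH A i i] adj_index[OF A] i by (simp add: mult.commute)
    also have "\<dots> = complex_of_real (\<Sum>j<n. R j / R i)"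
      unfolding sum_cnj_sq using sq i by simp
    finally have 2: "(mat_adjoint A * A) $$ (i,i) = complex_of_real (\<Sum>j<n. R j / R i)" .
    have "complex_of_real (\<Sum>j<n. R i / R j) = complex_of_real (\<Sum>j<n. R j / R i)" using 1 2 nor by metis
    hence "(\<Sum>j<n. R i / R j) = (\<Sum>j<n. R j / R i)" by (simp only: of_real_eq_iff)
    thus ?thesis unfolding S1_def S2_def by (simp add: sum_distrib_left sum_divide_distrib)
  qed
  have "S1 = S2" using key[OF 0] R0 by simp
  hence "R i = 1" if "i < n" for i
  proof -
    have "R i * S1 * R i = S1" using key[OF that] Rpos[OF that] \<open>S1 = S2\<close> by (simp add: field_simps)
    hence "(R i)^2 = 1" using S1pos by (simp add: power2_eq_square algebra_simps)
    thus ?thesis using Rpos[OF that] by (simp add: power2_eq_1_iff)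
  qed
  hence um: "\<forall>i<n. \<forall>j<n. cmod (A $$ (i,j)) = 1"
  proof (intro allI impI)
    fix i j assume "i < n" "j < n"
    hence "(cmod (A $$ (i,j)))^2 = 1" using sq \<open>\<And>i. i < n \<Longrightarrow> R i = 1\<close> by simp
    thus "cmod (A $$ (i,j)) = 1" using norm_ge_zero[of "A $$ (i,j)"] by (auto simp: power2_eq_1_iff)
  qed
  show ?thesis by (rule iv_to_P[OF A n diag r um])
qed

lemma P_iii:
  assumes A: "A \<in> carrier_mat n n" and n: "n \<ge> 1" and P: "isP A n"
  shows "vec_space.rank n A = 1 \<and> A * mat_adjoint A = mat_adjoint A * A \<and> (\<forall>i<n. A $$ (i,i) = 1)"
  using mult_rank1[OF A n] P_props[OF A P] by simp

lemma P_iv: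
  assumes A: "A \<in> carrier_mat n n" and n: "n \<ge> 1" and P: "isP A n"
  shows "vec_space.rank n A = 1 \<and> (\<forall>i<n. \<forall>j<n. cmod (A $$ (i,j)) = 1) \<and> (\<forall>i<n. A $$ (i,i) = 1)"
  using mult_rank1[OF A n] P_props[OF A P] by simp

lemma herm_sesq:
  assumes M: "M \<in> carrier_mat n n" and H: "mat_adjoint M = M"
    and v: "v \<in> carrier_vec n" and w: "w \<in> carrier_vec n"
  shows "(\<Sum>i<n. cnj ((M *\<^sub>v v) $ i) * w $ i) = (\<Sum>j<n. cnj (v $ j) * (M *\<^sub>v w) $ j)"
proof -
  have "(\<Sum>i<n. cnj ((M *\<^sub>v v) $ i) * w $ i) = (\<Sum>i<n. \<Sum>j<n. cnj (M $$ (i,j)) * cnj (v $ j) * w $ i)"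
    using mult_vec_index[OF M v] by (auto intro!: sum.cong simp: sum_distrib_right)
  also have "\<dots> = (\<Sum>j<n. \<Sum>i<n. cnj (M $$ (i,j)) * cnj (v $ j) * w $ i)" by (rule sum.swap)
  also have "\<dots> = (\<Sum>j<n. cnj (v $ j) * (\<Sum>i<n. M $$ (j,i) * w $ i))"
    using herm_entry[OF M H, symmetric] by (auto intro!: sum.cong simp: sum_distrib_left ac_simps)
  also have "\<dots> = (\<Sum>j<n. cnj (v $ j) * (M *\<^sub>v w) $ j)"
    using mult_vec_index[OF M w] by auto
  finally show ?thesis .
qed

lemma sum_cnj_sq': "(\<Sum>j\<in>S. cnj (f j) * f j) = complex_of_real (\<Sum>j\<in>S. (cmod (f j))^2)"
  using sum_cnj_sq[of f S] by (simp add: mult.commute)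

lemma vec_zero_from_sum:
  assumes u: "u \<in> carrier_vec n" and s: "(\<Sum>i<n. cnj (u $ i) * u $ i) = 0"
  shows "u = 0\<^sub>v n"
proof -
  have "complex_of_real (\<Sum>i<n. (cmod (u $ i))^2) = 0" using s unfolding sum_cnj_sq' .
  hence "(\<Sum>i<n. (cmod (u $ i))^2) = 0" by (simp only: of_real_eq_0_iff)
  hence "\<forall>i\<in>{..<n}. (cmod (u $ i))^2 = 0" by (subst sum_nonneg_eq_0_iff[symmetric], auto)
  thus ?thesis using u by (intro eq_vecI, auto)
qed

lemma herm_eigen_real:
  assumes M: "M \<in> carrier_mat n n" and H: "mat_adjoint M = M" and e: "e \<in> spectrum M"
  shows "cnj e = e"
proof -
  obtain v where v: "v \<in> carrier_vec n" and v0: "v \<noteq> 0\<^sub>v n" and ev: "M *\<^sub>v v = e \<cdot>\<^sub>v v"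
    using eigenvectorE[OF e M] by blast
  have "(\<Sum>i<n. cnj ((M *\<^sub>v v) $ i) * v $ i) = (\<Sum>j<n. cnj (v $ j) * (M *\<^sub>v v) $ j)"
    by (rule herm_sesq[OF M H v v])
  hence "(\<Sum>i<n. cnj e * (cnj (v $ i) * v $ i)) = (\<Sum>j<n. e * (cnj (v $ j) * v $ j))"
    unfolding ev using v by (auto simp: ac_simps)
  hence "cnj e * (\<Sum>i<n. cnj (v $ i) * v $ i) = e * (\<Sum>i<n. cnj (v $ i) * v $ i)"
    by (simp add: sum_distrib_left)
  moreover have "(\<Sum>i<n. cnj (v $ i) * v $ i) \<noteq> 0" using vec_zero_from_sum[OF v] v0 by blast
  ultimately show ?thesis by simp
qed

lemma herm_kernel_sq:
  fixes M :: "complex mat"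
  assumes M: "M \<in> carrier_mat n n" and H: "mat_adjoint M = M"
  shows "mat_kernel (M * M) = mat_kernel M"
proof
  show "mat_kernel M \<subseteq> mat_kernel (M * M)" by (rule mat_kernel_mult_subset[OF M M])
  show "mat_kernel (M * M) \<subseteq> mat_kernel M"
  proof
    fix v assume "v \<in> mat_kernel (M * M)"
    hence v: "v \<in> carrier_vec n" and z: "(M * M) *\<^sub>v v = 0\<^sub>v n" using M by (auto simp: mat_kernel_def)
    define u where "u = M *\<^sub>v v"
    have u: "u \<in> carrier_vec n" unfolding u_def using M v by simp
    have Mu: "M *\<^sub>v u = 0\<^sub>v n" using z M v unfolding u_def by simp
    have "(\<Sum>i<n. cnj (u $ i) * u $ i) = (\<Sum>j<n. cnj (v $ j) * (M *\<^sub>v u) $ j)"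
      unfolding u_def by (rule herm_sesq[OF M H v], simp add: u[unfolded u_def])
    also have "\<dots> = 0" using Mu by simp
    finally have "u = 0\<^sub>v n" by (rule vec_zero_from_sum[OF u])
    thus "v \<in> mat_kernel M" using v M unfolding u_def mat_kernel_def by auto
  qed
qed

lemma kernel_dim_eq:
  assumes "mat_kernel X = mat_kernel Y" "dim_col X = dim_col Y"
  shows "kernel_dim X = kernel_dim Y"
  using assms unfolding kernel_dim_def by simp

lemma sum_list_le_eq:
  fixes f g :: "'a \<Rightarrow> nat"
  assumes "sum_list (map f xs) = sum_list (map g xs)" "\<And>x. g x \<le> f x"
  shows "\<forall>x\<in>set xs. f x = g x"
  using assms(1)
proof (induct xs)
  case (Cons a xs)
  have "sum_list (map g xs) \<le> sum_list (map f xs)" using assms(2) by (induct xs, auto intro: add_mono)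
  thus ?case using Cons assms(2)[of a] by auto
qed simp

lemma sum_list_fst1: "\<forall>x\<in>set xs. fst x = (1::nat) \<Longrightarrow> sum_list (map fst xs) = length xs"
  by (induct xs, auto)

lemma jordan_matrix_diag:
  "\<forall>x\<in>set n_as. fst x = 1 \<Longrightarrow> jordan_matrix n_as = mat_diag (length n_as) (\<lambda>i. snd (n_as ! i))"
proof (induct n_as)
  case Nil
  show ?case by (rule eq_matI, auto simp: jordan_matrix_def mat_diag_def)
next
  case (Cons x rest)
  obtain s a where x: "x = (s,a)" by force
  have s: "s = 1" using Cons x by auto
  have IH: "jordan_matrix rest = mat_diag (length rest) (\<lambda>i. snd (rest ! i))" using Cons by auto
  have sl: "sum_list (map fst rest) = length rest" using Cons sum_list_fst1 by auto
  show ?case unfolding x s jordan_matrix_Cons IH sl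
  proof (rule eq_matI)
    fix i j assume i: "i < dim_row (mat_diag (length ((1, a) # rest)) (\<lambda>i. snd (((1, a) # rest) ! i)))"
      and j: "j < dim_col (mat_diag (length ((1, a) # rest)) (\<lambda>i. snd (((1, a) # rest) ! i)))"
    hence i': "i < Suc (length rest)" and j': "j < Suc (length rest)" by (auto simp: mat_diag_def)
    show "four_block_mat (jordan_block 1 a) (0\<^sub>m 1 (length rest)) (0\<^sub>m (length rest) 1)
           (mat_diag (length rest) (\<lambda>i. snd (rest ! i))) $$ (i, j) =
          mat_diag (length ((1, a) # rest)) (\<lambda>i. snd (((1, a) # rest) ! i)) $$ (i, j)"
      using i' j' by (cases i; cases j, auto simp: mat_diag_def)
  qed (auto simp: mat_diag_def)
qed

lemma prod_list_map_snd:
  "\<forall>x\<in>set n_as. fst x = 1 \<Longrightarrow>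
   (\<Prod>(s, a)\<leftarrow>n_as. ([:- a, 1:] :: complex poly) ^ s) = (\<Prod>e\<leftarrow>map snd n_as. [:- e, 1:])"
  by (induct n_as, auto)

lemma herm_diag:
  fixes A :: "complex mat"
  assumes A: "A \<in> carrier_mat n n" and H: "mat_adjoint A = A"
  shows "\<exists>P Q es. P \<in> carrier_mat n n \<and> Q \<in> carrier_mat n n \<and> P * Q = 1\<^sub>m n \<and> Q * P = 1\<^sub>m n \<and>
     A = P * mat_diag n (\<lambda>i. es ! i) * Q \<and> length es = n \<and>
     char_poly A = (\<Prod>e\<leftarrow>es. [:- e, 1:]) \<and>
     (\<forall>a. Polynomial.order a (char_poly A) = length (filter (\<lambda>e. e = a) es))"
proof -
  obtain as where "char_poly A = (\<Prod>a\<leftarrow>as. [:- a, 1:])" using char_poly_factorized[OF A] by blast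
  from jordan_nf_exists[OF A this] obtain n_as where jnf: "jordan_nf A n_as" by blast
  have cp: "char_poly A = (\<Prod>(s, a)\<leftarrow>n_as. [:- a, 1:] ^ s)" by (rule jordan_nf_char_poly[OF jnf])
  have cp0: "char_poly A \<noteq> 0" using degree_monic_char_poly[OF A] by auto
  have blocks: "\<forall>x\<in>set n_as. fst x = 1"
  proof
    fix x assume x: "x \<in> set n_as"
    obtain s ev where xe: "x = (s, ev)" by force
    have s0: "s \<noteq> 0" using jnf x xe unfolding jordan_nf_def by force
    have "s \<le> Polynomial.order ev (char_poly A)" using jordan_nf_block_size_order_bound[OF jnf] x xe by auto
    hence "Polynomial.order ev (char_poly A) \<noteq> 0" using s0 by auto
    hence "poly (char_poly A) ev = 0" using order_root by blast
    hence "ev \<in> spectrum A" using spectrum_root_char_poly[OF A] by auto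
    hence real: "cnj ev = ev" by (rule herm_eigen_real[OF A H])
    define M where "M = char_matrix A ev"
    have M: "M \<in> carrier_mat n n" unfolding M_def using A by simp
    have MH: "mat_adjoint M = M"
    proof (rule hermI[OF M])
      fix i j assume i: "i < n" and j: "j < n"
      show "M $$ (j,i) = cnj (M $$ (i,j))" unfolding M_def char_matrix_def
        using A i j herm_entry[OF A H i j] real by auto
    qed
    have "dim_gen_eigenspace A ev 2 = kernel_dim (M * M)"
      unfolding dim_gen_eigenspace_def M_def[symmetric] using M by (simp add: numeral_2_eq_2)
    also have "\<dots> = kernel_dim M" by (rule kernel_dim_eq[OF herm_kernel_sq[OF M MH]], insert M, auto)
    also have "\<dots> = dim_gen_eigenspace A ev 1"
      unfolding dim_gen_eigenspace_def M_def[symmetric] using M by simp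
    finally have eq: "dim_gen_eigenspace A ev 2 = dim_gen_eigenspace A ev 1" .
    have "\<forall>y\<in>set (map fst [(n, e)\<leftarrow>n_as . e = ev]). min 2 y = min 1 y"
      by (rule sum_list_le_eq, insert eq, unfold dim_gen_eigenspace[OF jnf], auto)
    moreover have "s \<in> set (map fst [(n, e)\<leftarrow>n_as . e = ev])" using x xe by force
    ultimately have "min 2 s = min 1 s" by blast
    thus "fst x = 1" using s0 xe by auto
  qed
  have J: "jordan_matrix n_as = mat_diag (length n_as) (\<lambda>i. snd (n_as ! i))"
    by (rule jordan_matrix_diag[OF blocks])
  from jnf[unfolded jordan_nf_def] have "similar_mat A (jordan_matrix n_as)" by auto
  then obtain P Q where wit: "similar_mat_wit A (jordan_matrix n_as) P Q" unfolding similar_mat_def by blast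
  hence car: "{A, jordan_matrix n_as, P, Q} \<subseteq> carrier_mat n n" and PQ: "P * Q = 1\<^sub>m n" and QP: "Q * P = 1\<^sub>m n"
    and eq: "A = P * jordan_matrix n_as * Q"
    using A unfolding similar_mat_wit_def Let_def by auto
  have "dim_row (jordan_matrix n_as) = n" using car by auto
  hence len: "length n_as = n" using sum_list_fst1[OF blocks] by simp
  define es where "es = map snd n_as"
  have Jd: "jordan_matrix n_as = mat_diag n (\<lambda>i. es ! i)" unfolding J len es_def
    by (rule eq_matI, auto simp: mat_diag_def len)
  have ord: "Polynomial.order a (char_poly A) = length (filter (\<lambda>e. e = a) es)" for a
  proof -
    have "Polynomial.order a (char_poly A) = sum_list (map fst (filter (\<lambda>na. snd na = a) n_as))"
      by (rule jordan_nf_order[OF jnf])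
    also have "\<dots> = length (filter (\<lambda>na. snd na = a) n_as)"
      by (rule sum_list_fst1, insert blocks, auto)
    also have "\<dots> = length (filter (\<lambda>e. e = a) es)" unfolding es_def by (simp add: filter_map o_def)
    finally show ?thesis .
  qed
  show ?thesis
    by (intro exI[of _ P] exI[of _ Q] exI[of _ es], insert car PQ QP eq Jd len ord cp prod_list_map_snd[OF blocks],
        auto simp: es_def)
qed

lemma spec_es:
  fixes A :: "complex mat"
  assumes A: "A \<in> carrier_mat n n" and cp: "char_poly A = (\<Prod>e\<leftarrow>es. [:- e, 1:])"
  shows "spectrum A = set es"
proof -
  have "poly (\<Prod>e\<leftarrow>es. [:- e, 1:]) k = 0 \<longleftrightarrow> k \<in> set es" for k :: complex
    by (induct es, auto)
  thus ?thesis unfolding spectrum_root_char_poly[OF A] cp by auto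
qed

definition tr :: "complex mat \<Rightarrow> complex" where "tr M = (\<Sum>i<dim_row M. M $$ (i,i))"

lemma tr_comm:
  assumes X: "X \<in> carrier_mat n m" and Y: "Y \<in> carrier_mat m n"
  shows "tr (X * Y) = tr (Y * X)"
proof -
  have "tr (X * Y) = (\<Sum>i<n. \<Sum>k<m. X $$ (i,k) * Y $$ (k,i))"
    unfolding tr_def using X Y by (auto intro!: sum.cong simp: mult_index[OF X Y] simp del: index_mult_mat(1))
  also have "\<dots> = (\<Sum>k<m. \<Sum>i<n. Y $$ (k,i) * X $$ (i,k))" by (subst sum.swap, simp add: mult.commute)
  also have "\<dots> = tr (Y * X)"
    unfolding tr_def using X Y by (auto intro!: sum.cong simp: mult_index[OF Y X] simp del: index_mult_mat(1))
  finally show ?thesis .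
qed

lemma tr_sim:
  fixes P Q B :: "complex mat"
  assumes P: "P \<in> carrier_mat n n" and Q: "Q \<in> carrier_mat n n" and B: "B \<in> carrier_mat n n"
    and QP: "Q * P = 1\<^sub>m n"
  shows "tr (P * B * Q) = tr B"
proof -
  have "tr (P * B * Q) = tr (Q * (P * B))" by (rule tr_comm, insert P B Q, auto)
  also have "Q * (P * B) = (Q * P) * B" using P Q B by (simp add: assoc_mult_mat[of _ n n _ n _ n])
  also have "\<dots> = B" using QP B by simp
  finally show ?thesis .
qed

lemma tr_diag: "tr (mat_diag n f) = (\<Sum>i<n. f i)"
  unfolding tr_def by (simp add: mat_diag_def)

lemma diag_sq:
  fixes P Q D :: "complex mat"
  assumes P: "P \<in> carrier_mat n n" and Q: "Q \<in> carrier_mat n n" and D: "D \<in> carrier_mat n n"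
    and QP: "Q * P = 1\<^sub>m n"
  shows "(P * D * Q) * (P * D * Q) = P * (D * D) * Q"
proof -
  have "(P * D * Q) * (P * D * Q) = P * (D * ((Q * P) * (D * Q)))"
    using P Q D by (simp add: assoc_mult_mat[of _ n n _ n _ n])
  also have "\<dots> = P * (D * (D * Q))" using QP D Q left_mult_one_mat[OF mult_carrier_mat[OF D Q]] by simp
  also have "\<dots> = P * (D * D) * Q" using P Q D by (simp add: assoc_mult_mat[of _ n n _ n _ n])
  finally show ?thesis .
qed

lemma herm_diag2:
  fixes A :: "complex mat"
  assumes A: "A \<in> carrier_mat n n" and H: "mat_adjoint A = A"
  obtains es where "length es = n" "spectrum A = set es"
    "\<forall>a. Polynomial.order a (char_poly A) = length (filter (\<lambda>e. e = a) es)"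
    "tr A = (\<Sum>i<n. es ! i)" "tr (A * A) = (\<Sum>i<n. es ! i * es ! i)"
    "(\<forall>i<n. es ! i \<in> {0, of_nat n}) \<Longrightarrow> A * A = of_nat n \<cdot>\<^sub>m A"
proof -
  obtain P Q es where P: "P \<in> carrier_mat n n" and Q: "Q \<in> carrier_mat n n" and PQ: "P * Q = 1\<^sub>m n"
    and QP: "Q * P = 1\<^sub>m n" and eq: "A = P * mat_diag n (\<lambda>i. es ! i) * Q" and len: "length es = n"
    and cp: "char_poly A = (\<Prod>e\<leftarrow>es. [:- e, 1:])"
    and ord: "\<forall>a. Polynomial.order a (char_poly A) = length (filter (\<lambda>e. e = a) es)"
    using herm_diag[OF A H] by blast
  define D where "D = mat_diag n (\<lambda>i. es ! i)"
  have D: "D \<in> carrier_mat n n" unfolding D_def by simp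
  have eq': "A = P * D * Q" using eq unfolding D_def .
  have AA: "A * A = P * (D * D) * Q" unfolding eq' by (rule diag_sq[OF P Q D QP])
  have "tr A = tr D" unfolding eq' by (rule tr_sim[OF P Q D QP])
  hence trA: "tr A = (\<Sum>i<n. es ! i)" unfolding D_def tr_diag .
  have "tr (A * A) = tr (D * D)" unfolding AA by (rule tr_sim[OF P Q mult_carrier_mat[OF D D] QP])
  hence trAA: "tr (A * A) = (\<Sum>i<n. es ! i * es ! i)" unfolding D_def mat_diag_diag tr_diag .
  have sq: "A * A = of_nat n \<cdot>\<^sub>m A" if es01: "\<forall>i<n. es ! i \<in> {0, of_nat n}"
  proof -
    have "D * D = of_nat n \<cdot>\<^sub>m D" unfolding D_def mat_diag_diag
      by (rule eq_matI, insert es01, auto simp: mat_diag_def)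
    hence "A * A = P * (of_nat n \<cdot>\<^sub>m D) * Q" unfolding AA by simp
    also have "\<dots> = of_nat n \<cdot>\<^sub>m (P * D * Q)"
      using P Q D by (simp add: mult_smult_distrib[of _ n n _ n] mult_smult_assoc_mat[of _ n n _ n])
    finally show ?thesis unfolding eq' .
  qed
  show ?thesis by (rule that[OF len spec_es[OF A cp] ord trA trAA sq])
qed

lemma cmod1_re1: "cmod z = 1 \<Longrightarrow> Re z = 1 \<Longrightarrow> z = 1"
proof -
  assume a: "cmod z = 1" "Re z = 1"
  have "(cmod z)^2 = (Re z)^2 + (Im z)^2" by (rule cmod_power2)
  hence "Im z = 0" using a by simp
  thus "z = 1" using a by (simp add: complex_eq_iff)
qed

lemma Q_lemma:
  fixes A :: "complex mat"
  assumes A: "A \<in> carrier_mat n n" and H: "mat_adjoint A = A" and diag: "\<forall>i<n. A $$ (i,i) = 1"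
    and AA: "A * A = of_nat n \<cdot>\<^sub>m A" and n1: "n \<ge> 1"
  shows "(\<forall>i<n. \<forall>j<n. cmod (A $$ (i,j)) = 1) \<and> (\<forall>i<n. \<forall>j<n. \<forall>k<n. A $$ (i,j) * A $$ (j,k) = A $$ (i,k))"
proof -
  have prod: "(\<Sum>j<n. A $$ (i,j) * A $$ (j,k)) = of_nat n * A $$ (i,k)" if i: "i < n" and k: "k < n" for i k
    using arg_cong[OF AA, of "\<lambda>M. M $$ (i,k)"] mult_index[OF A A i k] A i k by simp
  have row: "(\<Sum>j<n. (cmod (A $$ (i,j)))^2) = real n" if i: "i < n" for i
  proof -
    have "(\<Sum>j<n. A $$ (i,j) * cnj (A $$ (i,j))) = (\<Sum>j<n. A $$ (i,j) * A $$ (j,i))"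
      by (rule sum.cong, auto simp: herm_entry[OF A H i])
    also have "\<dots> = of_nat n" using prod[OF i i] diag i by simp
    finally have "complex_of_real (\<Sum>j<n. (cmod (A $$ (i,j)))^2) = complex_of_real (real n)"
      unfolding sum_cnj_sq by simp
    thus ?thesis by (simp only: of_real_eq_iff)
  qed
  have col: "(\<Sum>j<n. (cmod (A $$ (j,k)))^2) = real n" if k: "k < n" for k
  proof -
    have "(\<Sum>j<n. (cmod (A $$ (j,k)))^2) = (\<Sum>j<n. (cmod (A $$ (k,j)))^2)"
      by (rule sum.cong, auto simp: herm_entry[OF A H k])
    thus ?thesis using row[OF k] by simp
  qed
  have n0: "real n > 0" using n1 by simp
  have le1: "cmod (A $$ (i,k)) \<le> 1" if i: "i < n" and k: "k < n" for i k
  proof -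
    have "real n * cmod (A $$ (i,k)) = cmod (\<Sum>j<n. A $$ (i,j) * A $$ (j,k))"
      unfolding prod[OF i k] by (simp add: norm_mult)
    also have "\<dots> \<le> (\<Sum>j<n. cmod (A $$ (i,j)) * cmod (A $$ (j,k)))"
      by (rule order.trans[OF norm_sum], simp add: norm_mult)
    also have "\<dots> \<le> (\<Sum>j<n. ((cmod (A $$ (i,j)))^2 + (cmod (A $$ (j,k)))^2) / 2)"
    proof (rule sum_mono)
      fix j
      have "0 \<le> (cmod (A $$ (i,j)) - cmod (A $$ (j,k)))^2" by simp
      thus "cmod (A $$ (i,j)) * cmod (A $$ (j,k)) \<le> ((cmod (A $$ (i,j)))^2 + (cmod (A $$ (j,k)))^2) / 2"
        by (simp add: power2_eq_square algebra_simps)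
    qed
    also have "\<dots> = real n" using row[OF i] col[OF k]
      by (simp add: sum_divide_distrib[symmetric] sum.distrib)
    finally show ?thesis using n0 by simp
  qed
  have um: "cmod (A $$ (i,j)) = 1" if i: "i < n" and j: "j < n" for i j
  proof -
    have "(\<Sum>j<n. 1 - (cmod (A $$ (i,j)))^2) = 0" using row[OF i] by (simp add: sum_subtractf)
    moreover have "\<And>j. j \<in> {..<n} \<Longrightarrow> 0 \<le> 1 - (cmod (A $$ (i,j)))^2"
      using le1[OF i] by (auto intro: power_le_one)
    ultimately have "\<forall>j\<in>{..<n}. 1 - (cmod (A $$ (i,j)))^2 = 0"
      using sum_nonneg_eq_0_iff[of "{..<n}" "\<lambda>j. 1 - (cmod (A $$ (i,j)))^2"] by blast
    hence "(cmod (A $$ (i,j)))^2 = 1" using j by auto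
    thus ?thesis using norm_ge_zero[of "A $$ (i,j)"] by (auto simp: power2_eq_1_iff)
  qed
  have mult: "A $$ (i,j) * A $$ (j,k) = A $$ (i,k)" if i: "i < n" and j: "j < n" and k: "k < n" for i j k
  proof -
    define z where "z j = cnj (A $$ (i,k)) * (A $$ (i,j) * A $$ (j,k))" for j
    have cz: "cmod (z j) = 1" if "j < n" for j unfolding z_def using um i k that by (simp add: norm_mult)
    have ca: "cnj (A $$ (i,k)) * A $$ (i,k) = 1" using cmod1_cnj um[OF i k] by auto
    have "(\<Sum>j<n. z j) = cnj (A $$ (i,k)) * (of_nat n * A $$ (i,k))" unfolding z_def
      using prod[OF i k] by (simp add: sum_distrib_left[symmetric])
    also have "\<dots> = of_nat n" using ca by (simp add: ac_simps)
    finally have "Re (\<Sum>j<n. z j) = real n" by simp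
    hence "(\<Sum>j<n. Re (z j)) = real n" by (simp add: Re_sum)
    hence "(\<Sum>j<n. 1 - Re (z j)) = 0" by (simp add: sum_subtractf)
    moreover have "\<And>j. j \<in> {..<n} \<Longrightarrow> 0 \<le> 1 - Re (z j)" using cz complex_Re_le_cmod
      by (metis diff_ge_0_iff_ge lessThan_iff)
    ultimately have "\<forall>j\<in>{..<n}. 1 - Re (z j) = 0"
      using sum_nonneg_eq_0_iff[of "{..<n}" "\<lambda>j. 1 - Re (z j)"] by blast
    hence "z j = 1" using cmod1_re1[OF cz[OF j]] j by auto
    hence "A $$ (i,k) * (cnj (A $$ (i,k)) * (A $$ (i,j) * A $$ (j,k))) = A $$ (i,k)" unfolding z_def by simp
    thus ?thesis using ca by (simp add: mult.assoc[symmetric] mult.commute[of "A $$ (i,k)"])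
  qed
  show ?thesis using um mult by blast
qed

lemma V_to_P:
  fixes A :: "complex mat"
  assumes A: "A \<in> carrier_mat n n" and n: "n \<ge> 1" and H: "mat_adjoint A = A"
    and diag: "\<forall>i<n. A $$ (i,i) = 1" and sp: "spectrum A \<subseteq> {0, of_nat n}"
  shows "isP A n"
proof -
  obtain es where len: "length es = n" and spe: "spectrum A = set es"
    and sq: "(\<forall>i<n. es ! i \<in> {0, of_nat n}) \<Longrightarrow> A * A = of_nat n \<cdot>\<^sub>m A"
    using herm_diag2[OF A H] by metis
  have "\<forall>i<n. es ! i \<in> {0, of_nat n}" using sp spe len nth_mem by blast
  hence AA: "A * A = of_nat n \<cdot>\<^sub>m A" by (rule sq)
  from Q_lemma[OF A H diag AA n] have mult: "\<forall>i<n. \<forall>j<n. \<forall>k<n. A $$ (i,j) * A $$ (j,k) = A $$ (i,k)" by blast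
  show ?thesis by (rule M_to_P[OF A n diag H mult])
qed

lemma sum_list_01:
  assumes "\<forall>e\<in>set es. e = 0 \<or> e = (c :: complex)"
  shows "sum_list es = of_nat (length (filter (\<lambda>e. e \<noteq> 0) es)) * c"
  using assms by (induct es, auto simp: algebra_simps)

lemma P_order:
  fixes A :: "complex mat"
  assumes A: "A \<in> carrier_mat n n" and n: "n \<ge> 1" and P: "isP A n"
  shows "Polynomial.order 0 (char_poly A) = n - 1"
proof -
  note pp = P_props[OF A P]
  obtain es where len: "length es = n" and spe: "spectrum A = set es"
    and ord: "\<forall>a. Polynomial.order a (char_poly A) = length (filter (\<lambda>e. e = a) es)"
    and trA: "tr A = (\<Sum>i<n. es ! i)"
    using herm_diag2[OF A pp(1)] by metis
  have es01: "\<forall>e\<in>set es. e = 0 \<or> e = of_nat n" using P_spec[OF A P] spe by auto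
  have "tr A = of_nat n" unfolding tr_def using A pp(2) by simp
  moreover have "(\<Sum>i<n. es ! i) = sum_list es" using len
    by (simp add: sum_list_sum_nth atLeast0LessThan)
  ultimately have "sum_list es = of_nat n" using trA by simp
  hence "of_nat (length (filter (\<lambda>e. e \<noteq> 0) es)) * (of_nat n :: complex) = of_nat n"
    using sum_list_01[OF es01] by simp
  hence "of_nat (length (filter (\<lambda>e. e \<noteq> 0) es) * n) = (of_nat n :: complex)" by simp
  hence "length (filter (\<lambda>e. e \<noteq> 0) es) * n = n" using of_nat_eq_iff by blast
  hence l1: "length (filter (\<lambda>e. e \<noteq> 0) es) = 1" using n by simp
  have "length (filter (\<lambda>e. e = 0) es) + length (filter (\<lambda>e. \<not> e = 0) es) = length es"
    by (rule sum_length_filter_compl)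
  thus ?thesis using ord l1 len by simp
qed

lemma real_sq_bound:
  fixes r :: "nat \<Rightarrow> real"
  assumes nn: "\<forall>i<n. r i \<ge> 0" and s: "(\<Sum>i<n. r i) = N"
  shows "(\<Sum>i<n. (r i)^2) \<le> N^2" "(\<Sum>i<n. (r i)^2) = N^2 \<Longrightarrow> \<forall>i<n. r i = 0 \<or> r i = N"
proof -
  have le: "r i \<le> N" if i: "i < n" for i
    unfolding s[symmetric] by (rule member_le_sum, insert i nn, auto)
  have t: "(r i)^2 \<le> N * r i" if i: "i < n" for i
    using mult_right_mono[OF le[OF i], of "r i"] nn i by (simp add: power2_eq_square)
  have "(\<Sum>i<n. (r i)^2) \<le> (\<Sum>i<n. N * r i)" by (rule sum_mono, insert t, auto)
  also have "\<dots> = N^2" unfolding sum_distrib_left[symmetric] s by (simp add: power2_eq_square)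
  finally show "(\<Sum>i<n. (r i)^2) \<le> N^2" .
  assume eq: "(\<Sum>i<n. (r i)^2) = N^2"
  have "(\<Sum>i<n. N * r i - (r i)^2) = 0"
    unfolding sum_subtractf sum_distrib_left[symmetric] s eq by (simp add: power2_eq_square)
  moreover have "\<And>i. i \<in> {..<n} \<Longrightarrow> 0 \<le> N * r i - (r i)^2" using t by auto
  ultimately have "\<forall>i\<in>{..<n}. N * r i - (r i)^2 = 0"
    using sum_nonneg_eq_0_iff[of "{..<n}" "\<lambda>i. N * r i - (r i)^2"] by blast
  hence "r i * (N - r i) = 0" if "i < n" for i using that by (auto simp: power2_eq_square algebra_simps)
  thus "\<forall>i<n. r i = 0 \<or> r i = N" by auto
qed

lemma Re_cnj_sq: "Re (z * cnj z) = (cmod z)^2"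
  using arg_cong[OF complex_norm_square[of z], of Re] by simp

lemma pos_bound:
  fixes X :: "complex mat"
  assumes X: "X \<in> carrier_mat n n" and pos: "positive_mat X" and diag: "\<forall>i<n. X $$ (i,i) = 1"
  shows "(\<Sum>i<n. \<Sum>j<n. (cmod (X $$ (i,j)))^2) \<le> (real n)^2"
    "(\<Sum>i<n. \<Sum>j<n. (cmod (X $$ (i,j)))^2) = (real n)^2 \<Longrightarrow> spectrum X \<subseteq> {0, of_nat n}"
proof -
  have H: "mat_adjoint X = X" using pos unfolding positive_mat_def by auto
  obtain es where len: "length es = n" and spe: "spectrum X = set es"
    and trX: "tr X = (\<Sum>i<n. es ! i)" and trXX: "tr (X * X) = (\<Sum>i<n. es ! i * es ! i)"
    using herm_diag2[OF X H] by metis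
  define r where "r i = Re (es ! i)" for i
  have esr: "es ! i = complex_of_real (r i)" and rn: "r i \<ge> 0" if i: "i < n" for i
  proof -
    have "es ! i \<in> spectrum X" using spe len i by auto
    hence "Im (es ! i) = 0" "Re (es ! i) \<ge> 0" using pos unfolding positive_mat_def by auto
    thus "es ! i = complex_of_real (r i)" "r i \<ge> 0" unfolding r_def by (auto simp: complex_eq_iff)
  qed
  have "tr X = of_nat n" unfolding tr_def using X diag by simp
  hence "Re (\<Sum>i<n. es ! i) = real n" using trX by simp
  hence s: "(\<Sum>i<n. r i) = real n" unfolding Re_sum r_def .
  have "tr (X * X) = (\<Sum>i<n. \<Sum>j<n. X $$ (i,j) * X $$ (j,i))"
    unfolding tr_def using X by (auto intro!: sum.cong simp: mult_index[OF X X] simp del: index_mult_mat(1))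
  also have "\<dots> = (\<Sum>i<n. \<Sum>j<n. X $$ (i,j) * cnj (X $$ (i,j)))"
  proof (rule sum.cong[OF refl], rule sum.cong[OF refl])
    fix i j assume "i \<in> {..<n}" "j \<in> {..<n}"
    thus "X $$ (i,j) * X $$ (j,i) = X $$ (i,j) * cnj (X $$ (i,j))" using herm_entry[OF X H, of i j] by simp
  qed
  finally have trXX2: "tr (X * X) = (\<Sum>i<n. \<Sum>j<n. X $$ (i,j) * cnj (X $$ (i,j)))" .
  have "Re (tr (X * X)) = (\<Sum>i<n. \<Sum>j<n. (cmod (X $$ (i,j)))^2)"
    unfolding trXX2 Re_sum Re_cnj_sq ..
  moreover have "Re (tr (X * X)) = (\<Sum>i<n. (r i)^2)" unfolding trXX Re_sum
    by (rule sum.cong, auto simp: esr power2_eq_square)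
  ultimately have eq: "(\<Sum>i<n. \<Sum>j<n. (cmod (X $$ (i,j)))^2) = (\<Sum>i<n. (r i)^2)" by simp
  note b = real_sq_bound[of n r "real n", OF _ s]
  show "(\<Sum>i<n. \<Sum>j<n. (cmod (X $$ (i,j)))^2) \<le> (real n)^2" unfolding eq using b(1) rn by auto
  assume "(\<Sum>i<n. \<Sum>j<n. (cmod (X $$ (i,j)))^2) = (real n)^2"
  hence "\<forall>i<n. r i = 0 \<or> r i = real n" using b(2) rn eq by auto
  hence "\<forall>i<n. es ! i \<in> {0, of_nat n}" using esr by auto
  thus "spectrum X \<subseteq> {0, of_nat n}" unfolding spe using len by (auto simp: in_set_conv_nth)
qed

lemma entry_inv_carrier: "A \<in> carrier_mat n n \<Longrightarrow> entry_inv A \<in> carrier_mat n n"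
  by (simp add: entry_inv_def)

lemma entry_inv_index: "A \<in> carrier_mat n n \<Longrightarrow> i < n \<Longrightarrow> j < n \<Longrightarrow> entry_inv A $$ (i,j) = 1 / A $$ (i,j)"
  by (simp add: entry_inv_def)

lemma vi_to_P:
  fixes A :: "complex mat"
  assumes A: "A \<in> carrier_mat n n" and n: "n \<ge> 1" and nz: "\<forall>i<n. \<forall>j<n. A $$ (i,j) \<noteq> 0"
    and posA: "positive_mat A" and posI: "positive_mat (entry_inv A)" and diag: "\<forall>i<n. A $$ (i,i) = 1"
  shows "isP A n"
proof -
  have I: "entry_inv A \<in> carrier_mat n n" using A by (rule entry_inv_carrier)
  have diagI: "\<forall>i<n. entry_inv A $$ (i,i) = 1" using diag entry_inv_index[OF A] by simp
  define x where "x i j = (cmod (A $$ (i,j)))^2" for i j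
  have xpos: "x i j > 0" if "i < n" "j < n" for i j unfolding x_def using nz that by simp
  have xI: "(cmod (entry_inv A $$ (i,j)))^2 = 1 / x i j" if "i < n" "j < n" for i j
    unfolding x_def entry_inv_index[OF A that] by (simp add: norm_divide power_divide)
  have b1: "(\<Sum>i<n. \<Sum>j<n. x i j) \<le> (real n)^2" unfolding x_def by (rule pos_bound(1)[OF A posA diag])
  have "(\<Sum>i<n. \<Sum>j<n. 1 / x i j) = (\<Sum>i<n. \<Sum>j<n. (cmod (entry_inv A $$ (i,j)))^2)"
    by (rule sum.cong, simp, rule sum.cong, auto simp: xI)
  also have "\<dots> \<le> (real n)^2" by (rule pos_bound(1)[OF I posI diagI])
  finally have b2: "(\<Sum>i<n. \<Sum>j<n. 1 / x i j) \<le> (real n)^2" .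
  define t where "t i j = x i j + 1 / x i j - 2" for i j
  have tnn: "t i j \<ge> 0" if "i < n" "j < n" for i j
  proof -
    have "t i j = (x i j - 1)^2 / x i j" unfolding t_def using xpos[OF that]
      by (simp add: field_simps power2_eq_square)
    thus ?thesis using xpos[OF that] by simp
  qed
  have "(\<Sum>i<n. \<Sum>j<n. t i j) = (\<Sum>i<n. \<Sum>j<n. x i j) + (\<Sum>i<n. \<Sum>j<n. 1 / x i j) - 2 * (real n)^2"
    unfolding t_def by (simp add: sum.distrib sum_subtractf power2_eq_square)
  also have "\<dots> \<le> 0" using b1 b2 by simp
  finally have tle: "(\<Sum>i<n. \<Sum>j<n. t i j) \<le> 0" .
  have inn: "\<And>i. i \<in> {..<n} \<Longrightarrow> 0 \<le> (\<Sum>j<n. t i j)" using tnn by (auto intro: sum_nonneg)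
  have "(\<Sum>i<n. \<Sum>j<n. t i j) = 0" using tle sum_nonneg[of "{..<n}" "\<lambda>i. \<Sum>j<n. t i j"] inn by force
  hence "\<forall>i\<in>{..<n}. (\<Sum>j<n. t i j) = 0" using sum_nonneg_eq_0_iff[of "{..<n}" "\<lambda>i. \<Sum>j<n. t i j"] inn by blast
  hence t0: "t i j = 0" if "i < n" "j < n" for i j
    using sum_nonneg_eq_0_iff[of "{..<n}" "\<lambda>j. t i j"] tnn that by auto
  have x1: "x i j = 1" if "i < n" "j < n" for i j
  proof -
    have "(x i j - 1)^2 / x i j = 0" using t0[OF that] xpos[OF that] unfolding t_def
      by (simp add: field_simps power2_eq_square)
    thus ?thesis using xpos[OF that] by simp
  qed
  have "(\<Sum>i<n. \<Sum>j<n. (cmod (A $$ (i,j)))^2) = (real n)^2"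
    using x1 unfolding x_def by (simp add: power2_eq_square)
  hence sp: "spectrum A \<subseteq> {0, of_nat n}" by (rule pos_bound(2)[OF A posA diag])
  have H: "mat_adjoint A = A" using posA unfolding positive_mat_def by auto
  show ?thesis by (rule V_to_P[OF A n H diag sp])
qed

lemma P_vi:
  fixes A :: "complex mat"
  assumes A: "A \<in> carrier_mat n n" and P: "isP A n"
  shows "(\<forall>i<n. \<forall>j<n. A $$ (i,j) \<noteq> 0) \<and> positive_mat A \<and> positive_mat (entry_inv A) \<and>
          (\<forall>i<n. A $$ (i,i) = 1) \<and> (\<forall>i<n. entry_inv A $$ (i,i) = 1)"
proof -
  note pp = P_props[OF A P]
  obtain d where d1: "\<forall>i<n. cmod (d i) = 1" and d: "\<forall>i<n. \<forall>j<n. A $$ (i,j) = d i * cnj (d j)"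
    using P_entry[OF P] by blast
  have c: "cnj (d i) * d i = 1" if "i < n" for i using cmod1_cnj d1 that by auto
  have nz: "\<forall>i<n. \<forall>j<n. A $$ (i,j) \<noteq> 0" using pp(4) by fastforce
  have I: "entry_inv A \<in> carrier_mat n n" using A by (rule entry_inv_carrier)
  have PI: "isP (entry_inv A) n" unfolding isP_def
  proof (intro exI[of _ "\<lambda>i. cnj (d i)"] conjI allI impI)
    fix i assume i: "i < n" thus "cmod (cnj (d i)) = 1" using d1 by simp
    fix j assume j: "j < n"
    have "A $$ (i,j) * (cnj (d i) * cnj (cnj (d j))) = (cnj (d i) * d i) * (cnj (d j) * d j)"
      using d i j by (simp add: ac_simps)
    also have "\<dots> = 1" using c i j by simp
    finally have w: "A $$ (i,j) * (cnj (d i) * cnj (cnj (d j))) = 1" .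
    have "A $$ (i,j) \<noteq> 0" using nz i j by blast
    hence "cnj (d i) * cnj (cnj (d j)) = 1 / A $$ (i,j)" using w by (simp add: eq_divide_eq mult.commute)
    thus "entry_inv A $$ (i,j) = cnj (d i) * cnj (cnj (d j))" using entry_inv_index[OF A i j] by simp
  qed
  show ?thesis using nz P_pos[OF A P] P_pos[OF I PI] pp(2) entry_inv_index[OF A] by simp
qed

lemma vnorm_scale:
  assumes v: "v \<in> carrier_vec n" and c: "\<forall>i<n. cmod (c i) = 1"
  shows "vnorm (vec n (\<lambda>i. c i * v $ i)) = vnorm v"
  unfolding vnorm_def using v c by (auto intro!: arg_cong[of _ _ sqrt] sum.cong simp: norm_mult)

lemma op_norm_schur:
  assumes A: "A \<in> carrier_mat n n" and P: "isP A n" and B: "B \<in> carrier_mat n n"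
  shows "op_norm (schur_prod A B) = op_norm B"
proof -
  obtain d where d1: "\<forall>i<n. cmod (d i) = 1" and d: "\<forall>i<n. \<forall>j<n. A $$ (i,j) = d i * cnj (d j)"
    using P_entry[OF P] by blast
  have c: "cnj (d i) * d i = 1" if "i < n" for i using cmod1_cnj d1 that by auto
  have S: "schur_prod A B \<in> carrier_mat n n" using A by (rule schur_carrier)
  define f where "f x = vec n (\<lambda>j. cnj (d j) * x $ j)" for x :: "complex vec"
  define g where "g y = vec n (\<lambda>j. d j * y $ j)" for y :: "complex vec"
  have fc: "f x \<in> carrier_vec n" for x unfolding f_def by simp
  have gc: "g y \<in> carrier_vec n" for y unfolding g_def by simp
  have fg: "f (g y) = y" if "y \<in> carrier_vec n" for y
    using that c unfolding f_def g_def by (intro eq_vecI, auto simp: mult.assoc[symmetric])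
  have vf: "vnorm (f x) = vnorm x" if "x \<in> carrier_vec n" for x
    unfolding f_def by (rule vnorm_scale[OF that], insert d1, auto)
  have vg: "vnorm (g y) = vnorm y" if "y \<in> carrier_vec n" for y
    unfolding g_def by (rule vnorm_scale[OF that d1])
  have Sx: "schur_prod A B *\<^sub>v x = vec n (\<lambda>i. d i * (B *\<^sub>v f x) $ i)" if x: "x \<in> carrier_vec n" for x
  proof (rule eq_vecI)
    fix i assume "i < dim_vec (vec n (\<lambda>i. d i * (B *\<^sub>v f x) $ i))"
    hence i: "i < n" by simp
    show "(schur_prod A B *\<^sub>v x) $ i = vec n (\<lambda>i. d i * (B *\<^sub>v f x) $ i) $ i"
      using mult_vec_index[OF S x i] mult_vec_index[OF B fc i] i d A
      unfolding f_def by (auto intro!: sum.cong simp: sum_distrib_left schur_index ac_simps)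
  qed (insert S, auto)
  have vS: "vnorm (schur_prod A B *\<^sub>v x) = vnorm (B *\<^sub>v f x)" if x: "x \<in> carrier_vec n" for x
    unfolding Sx[OF x] vnorm_def using d1 B by (auto intro!: arg_cong[of _ _ sqrt] sum.cong simp: norm_mult)
  have "{vnorm (schur_prod A B *\<^sub>v x) | x. x \<in> carrier_vec (dim_col (schur_prod A B)) \<and> vnorm x \<le> 1}
      = {vnorm (B *\<^sub>v y) | y. y \<in> carrier_vec (dim_col B) \<and> vnorm y \<le> 1}"
  proof (intro equalityI subsetI)
    fix r assume "r \<in> {vnorm (schur_prod A B *\<^sub>v x) | x. x \<in> carrier_vec (dim_col (schur_prod A B)) \<and> vnorm x \<le> 1}"
    then obtain x where x: "x \<in> carrier_vec n" "vnorm x \<le> 1" and r: "r = vnorm (schur_prod A B *\<^sub>v x)"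
      using S by auto
    show "r \<in> {vnorm (B *\<^sub>v y) | y. y \<in> carrier_vec (dim_col B) \<and> vnorm y \<le> 1}"
      using r vS[OF x(1)] vf[OF x(1)] x fc B by auto
  next
    fix r assume "r \<in> {vnorm (B *\<^sub>v y) | y. y \<in> carrier_vec (dim_col B) \<and> vnorm y \<le> 1}"
    then obtain y where y: "y \<in> carrier_vec n" "vnorm y \<le> 1" and r: "r = vnorm (B *\<^sub>v y)"
      using B by auto
    have "r = vnorm (schur_prod A B *\<^sub>v g y)" using vS[OF gc] fg[OF y(1)] r by simp
    thus "r \<in> {vnorm (schur_prod A B *\<^sub>v x) | x. x \<in> carrier_vec (dim_col (schur_prod A B)) \<and> vnorm x \<le> 1}"
      using vg[OF y(1)] y gc S by auto
  qed
  thus ?thesis unfolding op_norm_def by simp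
qed

lemma op_norm_one:
  assumes n: "n \<ge> 1"
  shows "op_norm (1\<^sub>m n) = 1"
proof -
  have eq: "{vnorm (1\<^sub>m n *\<^sub>v x) | x. x \<in> carrier_vec (dim_col (1\<^sub>m n :: complex mat)) \<and> vnorm x \<le> 1}
        = {vnorm x | x. x \<in> carrier_vec n \<and> vnorm x \<le> 1}"
  proof (intro equalityI subsetI)
    fix r assume "r \<in> {vnorm x | x. x \<in> carrier_vec n \<and> vnorm x \<le> 1}"
    then obtain x where "x \<in> carrier_vec n" "vnorm x \<le> 1" "r = vnorm x" by auto
    thus "r \<in> {vnorm (1\<^sub>m n *\<^sub>v x) | x. x \<in> carrier_vec (dim_col (1\<^sub>m n :: complex mat)) \<and> vnorm x \<le> 1}"
      by (intro CollectI exI[of _ x], auto)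
  qed auto
  have u: "vnorm (unit_vec n 0 :: complex vec) = 1"
  proof -
    have "(\<Sum>i<n. (cmod ((unit_vec n 0 :: complex vec) $ i))^2) = (\<Sum>i<n. if i = 0 then 1 else 0)"
      by (rule sum.cong, auto simp: unit_vec_def)
    also have "\<dots> = 1" using n by simp
    finally show ?thesis unfolding vnorm_def by simp
  qed
  have "Sup {vnorm x | x. x \<in> carrier_vec n \<and> vnorm x \<le> 1} = 1"
    by (rule cSup_eq_maximum, insert u, auto intro!: exI[of _ "unit_vec n 0"])
  thus ?thesis unfolding op_norm_def eq .
qed

lemma P_norm:
  assumes A: "A \<in> carrier_mat n n" and n: "n \<ge> 1" and P: "isP A n"
  shows "schur_map_norm n A = 1"
proof -
  have eq: "{op_norm (schur_prod A B) | B. B \<in> carrier_mat n n \<and> op_norm B \<le> 1}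
     = {op_norm B | B. B \<in> carrier_mat n n \<and> op_norm B \<le> 1}"
    using op_norm_schur[OF A P] by force
  have "Sup {op_norm B | B. B \<in> carrier_mat n n \<and> op_norm B \<le> 1} = 1"
    by (rule cSup_eq_maximum, insert op_norm_one[OF n], auto intro!: exI[of _ "1\<^sub>m n"])
  thus ?thesis unfolding schur_map_norm_def eq .
qed

theorem theorem2p4:
  fixes A :: "complex mat" and n :: nat
  assumes n: "n \<ge> 1"
    and A: "A \<in> carrier_mat n n"
    and unital: "schur_prod A (1\<^sub>m n) = 1\<^sub>m n"
  shows
    "(((\<forall>B\<in>carrier_mat n n. \<forall>C\<in>carrier_mat n n. schur_prod A (B * C) = schur_prod A B * schur_prod A C) \<and>
      (\<forall>B\<in>carrier_mat n n. schur_prod A (mat_adjoint B) = mat_adjoint (schur_prod A B)))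
     \<longleftrightarrow> (completely_positive n (schur_prod A) \<and> algebra_iso n (schur_prod A))) \<and>
     ((completely_positive n (schur_prod A) \<and> algebra_iso n (schur_prod A))
     \<longleftrightarrow> (vec_space.rank n A = 1 \<and> A * mat_adjoint A = mat_adjoint A * A \<and>
          (\<forall>i<n. A $$ (i,i) = 1))) \<and>
     ((vec_space.rank n A = 1 \<and> A * mat_adjoint A = mat_adjoint A * A \<and>
          (\<forall>i<n. A $$ (i,i) = 1))
     \<longleftrightarrow> (vec_space.rank n A = 1 \<and>
          (\<forall>i<n. \<forall>j<n. cmod (A $$ (i,j)) = 1) \<and> (\<forall>i<n. A $$ (i,i) = 1))) \<and>
     ((vec_space.rank n A = 1 \<and>
          (\<forall>i<n. \<forall>j<n. cmod (A $$ (i,j)) = 1) \<and> (\<forall>i<n. A $$ (i,i) = 1))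
     \<longleftrightarrow> (mat_adjoint A = A \<and> spectrum A \<subseteq> {0, of_nat n} \<and>
          Polynomial.order 0 (char_poly A) = n - 1 \<and> schur_map_norm n A = 1)) \<and>
     ((mat_adjoint A = A \<and> spectrum A \<subseteq> {0, of_nat n} \<and>
          Polynomial.order 0 (char_poly A) = n - 1 \<and> schur_map_norm n A = 1)
     \<longleftrightarrow> ((\<forall>i<n. \<forall>j<n. A $$ (i,j) \<noteq> 0) \<and>
          positive_mat A \<and> positive_mat (entry_inv A) \<and>
          (\<forall>i<n. A $$ (i,i) = 1) \<and> (\<forall>i<n. entry_inv A $$ (i,i) = 1)))"
proof -
  have diag: "\<forall>i<n. A $$ (i,i) = 1"
  proof (intro allI impI)
    fix i assume i: "i < n"
    have "schur_prod A (1\<^sub>m n) $$ (i,i) = 1\<^sub>m n $$ (i,i)" using unital by simp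
    thus "A $$ (i,i) = 1" using A i by (simp add: schur_index)
  qed
  have e1: "((\<forall>B\<in>carrier_mat n n. \<forall>C\<in>carrier_mat n n. schur_prod A (B * C) = schur_prod A B * schur_prod A C) \<and>
      (\<forall>B\<in>carrier_mat n n. schur_prod A (mat_adjoint B) = mat_adjoint (schur_prod A B))) \<longleftrightarrow> isP A n"
    using i_to_P[OF A n diag] P_hom[OF A] P_adj[OF A] by blast
  have e2: "(completely_positive n (schur_prod A) \<and> algebra_iso n (schur_prod A)) \<longleftrightarrow> isP A n"
    using ii_to_P[OF n A diag] P_CP[OF n A] P_iso[OF A] by blast
  have e3: "(vec_space.rank n A = 1 \<and> A * mat_adjoint A = mat_adjoint A * A \<and> (\<forall>i<n. A $$ (i,i) = 1)) \<longleftrightarrow> isP A n"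
    using iii_to_P[OF A n] P_iii[OF A n] by blast
  have e4: "(vec_space.rank n A = 1 \<and> (\<forall>i<n. \<forall>j<n. cmod (A $$ (i,j)) = 1) \<and> (\<forall>i<n. A $$ (i,i) = 1)) \<longleftrightarrow> isP A n"
    using iv_to_P[OF A n] P_iv[OF A n] by blast
  have e5: "(mat_adjoint A = A \<and> spectrum A \<subseteq> {0, of_nat n} \<and>
          Polynomial.order 0 (char_poly A) = n - 1 \<and> schur_map_norm n A = 1) \<longleftrightarrow> isP A n"
    using V_to_P[OF A n _ diag] P_props(1)[OF A] P_spec[OF A] P_order[OF A n] P_norm[OF A n] by blast
  have e6: "((\<forall>i<n. \<forall>j<n. A $$ (i,j) \<noteq> 0) \<and> positive_mat A \<and> positive_mat (entry_inv A) \<and>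
          (\<forall>i<n. A $$ (i,i) = 1) \<and> (\<forall>i<n. entry_inv A $$ (i,i) = 1)) \<longleftrightarrow> isP A n"
    using vi_to_P[OF A n] P_vi[OF A] by blast
  show ?thesis using e1 e2 e3 e4 e5 e6 by blast
qed

end
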